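(* Let $u\in[0,2\pi)$ and $v\in[0,\pi)$. Define $$K_1=\cos\tfrac v2\cos\tfrac u2\,\mathbb{1}+\sin\tfrac v2\sin\tfrac u2\,\sigma_3,\qquad K_2=\sin\tfrac v2\cos\tfrac u2\,\sigma_1+i\cos\tfrac v2\sin\tfrac u2\,\sigma_2,$$ where $\sigma_1,\sigma_2,\sigma_3$ are the Pauli matrices. Let $\Phi^*(\sigma)=K_1^\dagger\sigma K_1+K_2^\dagger\sigma K_2$ for Hermitian $2\times2$ matrices $\sigma$. Let $\sigma^A,\sigma^B$ be diagonal Hermitian $2\times 2$ matrices. If $$F=C^Q-\sigma^A\otimes\mathbb{1}_2-\mathbb{1}_2\otimes\sigma^B\ge0,$$ then also $$F^\Phi=C^Q-\Phi^*(\sigma^A)\otimes\mathbb{1}_2-\mathbb{1}_2\otimes\Phi^*(\sigma^B)\ge0.$$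
   Context: Here $C^Q=\tfrac12(\mathbb{1}-S)$ on $\mathbb{C}^2\otimes\mathbb{C}^2$, where $S(|x\rangle|y\rangle)=|y\rangle|x\rangle$ is the swap operator. The operators $K_1,K_2$ satisfy $K_1^\dagger K_1+K_2^\dagger K_2=\mathbb{1}$, so they are the Kraus operators of a single-qubit CPTP map $\Phi(\rho)=K_1\rho K_1^\dagger+K_2\rho K_2^\dagger$, and $\Phi^*$ is its dual map. "$\ge0$" means positive semidefinite. *)

theory Defs
  imports "Jordan_Normal_Form.Schur_Decomposition"
begin

definition hermitian_mat :: "complex mat \<Rightarrow> bool" where
  "hermitian_mat A \<longleftrightarrow> A \<in> carrier_mat (dim_row A) (dim_row A) \<and> mat_adjoint A = A"

definition psd :: "complex mat \<Rightarrow> bool" where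
  "psd A \<longleftrightarrow> hermitian_mat A \<and>
     (\<forall>x \<in> carrier_vec (dim_row A). 0 \<le> Re (conjugate x \<bullet> (A *\<^sub>v x)))"

(* Kronecker/tensor product, basis |i>|j> indexed by i * dim B + j *)
definition kron :: "complex mat \<Rightarrow> complex mat \<Rightarrow> complex mat" where
  "kron A B = mat (dim_row A * dim_row B) (dim_col A * dim_col B)
     (\<lambda>(i, j). A $$ (i div dim_row B, j div dim_col B) * B $$ (i mod dim_row B, j mod dim_col B))"

definition sigma1 :: "complex mat" where
  "sigma1 = mat_of_rows_list 2 [[0, 1], [1, 0]]"
definition sigma2 :: "complex mat" where
  "sigma2 = mat_of_rows_list 2 [[0, -\<i>], [\<i>, 0]]"
definition sigma3 :: "complex mat" where
  "sigma3 = mat_of_rows_list 2 [[1, 0], [0, -1]]"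

(* swap operator on C^2 \<otimes> C^2: S |x>|y> = |y>|x>, basis index 2x+y *)
definition swap_op :: "complex mat" where
  "swap_op = mat 4 4 (\<lambda>(i, j). if i = 2 * (j mod 2) + j div 2 then 1 else 0)"

definition CQ :: "complex mat" where
  "CQ = (1/2 :: complex) \<cdot>\<^sub>m (1\<^sub>m 4 - swap_op)"

definition K1 :: "real \<Rightarrow> real \<Rightarrow> complex mat" where
  "K1 u v = complex_of_real (cos (v/2) * cos (u/2)) \<cdot>\<^sub>m 1\<^sub>m 2
          + complex_of_real (sin (v/2) * sin (u/2)) \<cdot>\<^sub>m sigma3"

definition K2 :: "real \<Rightarrow> real \<Rightarrow> complex mat" where
  "K2 u v = complex_of_real (sin (v/2) * cos (u/2)) \<cdot>\<^sub>m sigma1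
          + (\<i> * complex_of_real (cos (v/2) * sin (u/2))) \<cdot>\<^sub>m sigma2"

definition Phi_dual :: "real \<Rightarrow> real \<Rightarrow> complex mat \<Rightarrow> complex mat" where
  "Phi_dual u v s = mat_adjoint (K1 u v) * s * K1 u v + mat_adjoint (K2 u v) * s * K2 u v"

end

theory Submission imports Defs begin
lemma adj_eq: "A \<in> carrier_mat n m \<Longrightarrow> mat_adjoint A = mat m n (\<lambda>(i,j). cnj (A$$(j,i)))"
  unfolding mat_adjoint_def
  by (rule eq_matI) (auto simp: mat_of_rows_def cols_def conjugate_vec_def)

definition m2 :: "complex \<Rightarrow> complex \<Rightarrow> complex \<Rightarrow> complex \<Rightarrow> complex mat" where
 "m2 a b c d = mat 2 2 (\<lambda>(i,j). if i=0 then (if j=0 then a else b) else (if j=0 then c else d))"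

lemma less2: "(i::nat) < 2 \<longleftrightarrow> i = 0 \<or> i = 1" by auto

lemma m2_carrier[simp]: "m2 a b c d \<in> carrier_mat 2 2" by (simp add: m2_def)
lemma m2_dims[simp]: "dim_row (m2 a b c d) = 2" "dim_col (m2 a b c d) = 2" by (simp_all add: m2_def)

lemma m2_mult: "m2 a b c d * m2 a' b' c' d' = m2 (a*a'+b*c') (a*b'+b*d') (c*a'+d*c') (c*b'+d*d')"
  by (rule eq_matI) (auto simp: m2_def scalar_prod_def less2 row_def col_def numeral_2_eq_2)

lemma m2_add: "m2 a b c d + m2 a' b' c' d' = m2 (a+a') (b+b') (c+c') (d+d')"
  by (rule eq_matI) (auto simp: m2_def less2)

lemma m2_smult: "k \<cdot>\<^sub>m m2 a b c d = m2 (k*a) (k*b) (k*c) (k*d)"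
  by (rule eq_matI) (auto simp: m2_def less2)

lemma m2_adj: "mat_adjoint (m2 a b c d) = m2 (cnj a) (cnj c) (cnj b) (cnj d)"
  by (subst adj_eq[OF m2_carrier]) (rule eq_matI, auto simp: m2_def less2)

lemma one2: "1\<^sub>m 2 = m2 1 0 0 1"
  by (rule eq_matI) (auto simp: m2_def less2)

lemma sig1: "sigma1 = m2 0 1 1 0"
  by (rule eq_matI) (auto simp: m2_def sigma1_def mat_of_rows_list_def less2)
lemma sig2: "sigma2 = m2 0 (-\<i>) \<i> 0"
  by (rule eq_matI) (auto simp: m2_def sigma2_def mat_of_rows_list_def less2)
lemma sig3: "sigma3 = m2 1 0 0 (-1)"
  by (rule eq_matI) (auto simp: m2_def sigma3_def mat_of_rows_list_def less2)

lemma Phi_m2: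
  "Phi_dual u v (m2 (of_real d0) 0 0 (of_real d1)) =
    m2 (of_real ((cos (v/2) * cos (u/2) + sin (v/2) * sin (u/2))^2 * d0 + (sin (v/2) * cos (u/2) - cos (v/2) * sin (u/2))^2 * d1)) 0 0
       (of_real ((cos (v/2) * cos (u/2) - sin (v/2) * sin (u/2))^2 * d1 + (sin (v/2) * cos (u/2) + cos (v/2) * sin (u/2))^2 * d0))"
  unfolding Phi_dual_def K1_def K2_def sig1 sig2 sig3 one2 m2_smult m2_add m2_adj m2_mult
  apply (simp add: power2_eq_square)
  apply (simp add: algebra_simps complex_eq_iff)
  done

lemma diag_repr:
  assumes "A \<in> carrier_mat 2 2" "diagonal_mat A" "hermitian_mat A"
  shows "A = m2 (of_real (Re (A$$(0,0)))) 0 0 (of_real (Re (A$$(1,1))))"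
proof -
  have h: "mat_adjoint A = A" using assms(3) by (simp add: hermitian_mat_def)
  have "mat_adjoint A $$ (0,0) = cnj (A $$ (0,0))" "mat_adjoint A $$ (1,1) = cnj (A $$ (1,1))"
    using adj_eq[OF assms(1)] by auto
  hence r: "cnj (A $$ (0,0)) = A $$ (0,0)" "cnj (A $$ (1,1)) = A $$ (1,1)" using h by auto
  have z: "A $$ (0,1) = 0" "A $$ (1,0) = 0" using assms(1,2) by (auto simp: diagonal_mat_def)
  show ?thesis
    apply (rule eq_matI)
    using assms(1) r z by (auto simp: m2_def less2 complex_eq_iff)
qed

definition G4 :: "real \<Rightarrow> real \<Rightarrow> real \<Rightarrow> real \<Rightarrow> nat \<Rightarrow> nat \<Rightarrow> real" where
  "G4 a0 a1 b0 b1 i j = (if i = j then (if i = 0 then -a0-b0 else if i = 1 then 1/2 - a0 - b1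
      else if i = 2 then 1/2 - a1 - b0 else -a1-b1)
     else if (i = 1 \<and> j = 2) \<or> (i = 2 \<and> j = 1) then -1/2 else 0)"

lemma less4: "(i::nat) < 4 \<longleftrightarrow> i = 0 \<or> i = 1 \<or> i = 2 \<or> i = 3" by auto

lemma M4: "CQ - kron (m2 (of_real a0) 0 0 (of_real a1)) (1\<^sub>m 2) - kron (1\<^sub>m 2) (m2 (of_real b0) 0 0 (of_real b1))
   = mat 4 4 (\<lambda>(i,j). of_real (G4 a0 a1 b0 b1 i j))"
proof (rule eq_matI)
  fix i j assume "i < dim_row (mat 4 4 (\<lambda>(i,j). of_real (G4 a0 a1 b0 b1 i j)) :: complex mat)"
    "j < dim_col (mat 4 4 (\<lambda>(i,j). of_real (G4 a0 a1 b0 b1 i j)) :: complex mat)"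
  hence "i < 4" "j < 4" by auto
  thus "(CQ - kron (m2 (of_real a0) 0 0 (of_real a1)) (1\<^sub>m 2) - kron (1\<^sub>m 2) (m2 (of_real b0) 0 0 (of_real b1))) $$ (i,j)
     = mat 4 4 (\<lambda>(i,j). of_real (G4 a0 a1 b0 b1 i j)) $$ (i,j)"
    unfolding less4
    by (elim disjE; simp add: CQ_def swap_op_def kron_def m2_def G4_def)
qed (auto simp: CQ_def swap_op_def kron_def)

lemma qf:
  assumes "x \<in> carrier_vec 4"
  shows "Re (conjugate x \<bullet> (mat 4 4 (\<lambda>(i,j). complex_of_real (G4 a0 a1 b0 b1 i j)) *\<^sub>v x))
    = (-a0-b0) * ((Re (x$0))^2 + (Im (x$0))^2) + (1/2 - a0 - b1) * ((Re (x$1))^2 + (Im (x$1))^2)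
      + (1/2 - a1 - b0) * ((Re (x$2))^2 + (Im (x$2))^2) + (-a1-b1) * ((Re (x$3))^2 + (Im (x$3))^2)
      - (Re (x$1) * Re (x$2) + Im (x$1) * Im (x$2))"
proof -
  have d: "dim_vec x = 4" using assms by auto
  have "conjugate x \<bullet> (mat 4 4 (\<lambda>(i,j). complex_of_real (G4 a0 a1 b0 b1 i j)) *\<^sub>v x)
     = (\<Sum>i<4. cnj (x$i) * (\<Sum>j<4. complex_of_real (G4 a0 a1 b0 b1 i j) * x$j))"
    using d by (simp add: scalar_prod_def mult_mat_vec_def row_def lessThan_atLeast0)
  also have "\<dots> = cnj (x$0) * (of_real (-a0-b0) * x$0) + cnj (x$1) * (of_real (1/2-a0-b1) * x$1 + of_real (-1/2) * x$2)
      + cnj (x$2) * (of_real (-1/2) * x$1 + of_real (1/2-a1-b0) * x$2) + cnj (x$3) * (of_real (-a1-b1) * x$3)"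
    by (simp add: eval_nat_numeral G4_def)
  finally have S: "conjugate x \<bullet> (mat 4 4 (\<lambda>(i,j). complex_of_real (G4 a0 a1 b0 b1 i j)) *\<^sub>v x) = cnj (x$0) * (of_real (-a0-b0) * x$0) + cnj (x$1) * (of_real (1/2-a0-b1) * x$1 + of_real (-1/2) * x$2)
      + cnj (x$2) * (of_real (-1/2) * x$1 + of_real (1/2-a1-b0) * x$2) + cnj (x$3) * (of_real (-a1-b1) * x$3)" .
  show ?thesis unfolding S by (simp add: field_simps power2_eq_square)
qed

lemma G4_herm: "hermitian_mat (mat 4 4 (\<lambda>(i,j). complex_of_real (G4 a0 a1 b0 b1 i j)))"
  unfolding hermitian_mat_def
  by (auto simp: adj_eq[of _ 4 4] intro!: eq_matI) (auto simp: G4_def)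

lemma key:
  fixes X Y a0 a1 b0 b1 :: real
  assumes "0 \<le> X" "X \<le> 1" "0 \<le> Y" "Y \<le> 1" "a0 + b0 \<le> 0" "a1 + b1 \<le> 0"
    and h: "\<And>r s. r * s \<le> (1/2-a0-b1) * r^2 + (1/2-a1-b0) * s^2"
  shows "r * s \<le> (1/2 - (X*a0 + (1-X)*a1) - ((1-Y)*b0 + Y*b1)) * r^2
               + (1/2 - ((1-Y)*a0 + Y*a1) - (X*b0 + (1-X)*b1)) * s^2"
proof -
  have E1: "0 \<le> (1/2-a0-b1) * r^2 + (1/2-a1-b0) * s^2 - r*s" using h[of r s] by simp
  have E2: "0 \<le> (1/2-a1-b0) * r^2 + (1/2-a0-b1) * s^2 - r*s" using h[of s r] by (simp add: mult.commute)
  have sq: "r*s \<le> (r^2 + s^2)/2" using sum_squares_ge_zero[of "r-s" 0]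
    by (simp add: power2_eq_square algebra_simps)
  have E3: "0 \<le> (1/2-a0-b0) * (r^2+s^2) - r*s"
  proof -
    have "(1/2) * (r^2+s^2) \<le> (1/2-a0-b0) * (r^2+s^2)"
      by (rule mult_right_mono) (use assms in auto)
    thus ?thesis using sq by linarith
  qed
  have E4: "0 \<le> (1/2-a1-b1) * (r^2+s^2) - r*s"
  proof -
    have "(1/2) * (r^2+s^2) \<le> (1/2-a1-b1) * (r^2+s^2)"
      by (rule mult_right_mono) (use assms in auto)
    thus ?thesis using sq by linarith
  qed
  have id: "(1/2 - (X*a0 + (1-X)*a1) - ((1-Y)*b0 + Y*b1)) * r^2
               + (1/2 - ((1-Y)*a0 + Y*a1) - (X*b0 + (1-X)*b1)) * s^2 - r*s
     = (X*Y) * ((1/2-a0-b1) * r^2 + (1/2-a1-b0) * s^2 - r*s)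
     + ((1-X)*(1-Y)) * ((1/2-a1-b0) * r^2 + (1/2-a0-b1) * s^2 - r*s)
     + (X*(1-Y)) * ((1/2-a0-b0) * (r^2+s^2) - r*s)
     + ((1-X)*Y) * ((1/2-a1-b1) * (r^2+s^2) - r*s)"
    by (simp add: field_simps power2_eq_square)
  have "0 \<le> (X*Y) * ((1/2-a0-b1) * r^2 + (1/2-a1-b0) * s^2 - r*s)
     + ((1-X)*(1-Y)) * ((1/2-a1-b0) * r^2 + (1/2-a0-b1) * s^2 - r*s)
     + (X*(1-Y)) * ((1/2-a0-b0) * (r^2+s^2) - r*s)
     + ((1-X)*Y) * ((1/2-a1-b1) * (r^2+s^2) - r*s)"
    using E1 E2 E3 E4 assms(1-4)
    by (intro add_nonneg_nonneg mult_nonneg_nonneg) auto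
  thus ?thesis using id by linarith
qed

lemma alg1: "((a::real)*c+b*d)^2 + (b*c - a*d)^2 = (a^2+b^2)*(c^2+d^2)" by (simp add: power2_eq_square algebra_simps)
lemma alg2: "((a::real)*c-b*d)^2 + (b*c + a*d)^2 = (a^2+b^2)*(c^2+d^2)" by (simp add: power2_eq_square algebra_simps)
lemma trig1: fixes u v :: real shows "(cos (v/2) * cos (u/2) + sin (v/2) * sin (u/2))^2 + (sin (v/2) * cos (u/2) - cos (v/2) * sin (u/2))^2 = 1"
  unfolding alg1 by simp
lemma trig2: fixes u v :: real shows "(cos (v/2) * cos (u/2) - sin (v/2) * sin (u/2))^2 + (sin (v/2) * cos (u/2) + cos (v/2) * sin (u/2))^2 = 1"
  unfolding alg2 by simp

lemma psd_G4:
  assumes "psd (mat 4 4 (\<lambda>(i,j). complex_of_real (G4 a0 a1 b0 b1 i j)))"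
  shows "a0 + b0 \<le> 0" "a1 + b1 \<le> 0" "\<And>r s. r * s \<le> (1/2-a0-b1) * r^2 + (1/2-a1-b0) * s^2"
proof -
  have P: "\<And>x. x \<in> carrier_vec 4 \<Longrightarrow> 0 \<le> Re (conjugate x \<bullet> (mat 4 4 (\<lambda>(i,j). complex_of_real (G4 a0 a1 b0 b1 i j)) *\<^sub>v x))"
    using assms unfolding psd_def by auto
  have "0 \<le> Re (conjugate (vec 4 (\<lambda>i. if i = 0 then 1 else 0)) \<bullet> (mat 4 4 (\<lambda>(i,j). complex_of_real (G4 a0 a1 b0 b1 i j)) *\<^sub>v (vec 4 (\<lambda>i. if i = 0 then 1 else 0))))"
    by (rule P) simp
  then show "a0 + b0 \<le> 0" by (subst (asm) qf) auto
  have "0 \<le> Re (conjugate (vec 4 (\<lambda>i. if i = 3 then 1 else 0)) \<bullet> (mat 4 4 (\<lambda>(i,j). complex_of_real (G4 a0 a1 b0 b1 i j)) *\<^sub>v (vec 4 (\<lambda>i. if i = 3 then 1 else 0))))"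
    by (rule P) simp
  then show "a1 + b1 \<le> 0" by (subst (asm) qf) auto
  fix r s :: real
  have "0 \<le> Re (conjugate (vec 4 (\<lambda>i. if i = 1 then complex_of_real r else if i = 2 then complex_of_real s else 0)) \<bullet> (mat 4 4 (\<lambda>(i,j). complex_of_real (G4 a0 a1 b0 b1 i j)) *\<^sub>v (vec 4 (\<lambda>i. if i = 1 then complex_of_real r else if i = 2 then complex_of_real s else 0))))"
    by (rule P) simp
  then show "r * s \<le> (1/2-a0-b1) * r^2 + (1/2-a1-b0) * s^2" by (subst (asm) qf) auto
qed

theorem lemma5p1:
  fixes u v :: real and sA sB :: "complex mat"
  assumes "0 \<le> u" "u < 2 * pi" "0 \<le> v" "v < pi"
    and "sA \<in> carrier_mat 2 2" "diagonal_mat sA" "hermitian_mat sA"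
    and "sB \<in> carrier_mat 2 2" "diagonal_mat sB" "hermitian_mat sB"
    and "psd (CQ - kron sA (1\<^sub>m 2) - kron (1\<^sub>m 2) sB)"
  shows "psd (CQ - kron (Phi_dual u v sA) (1\<^sub>m 2) - kron (1\<^sub>m 2) (Phi_dual u v sB))"
proof -
  define a0 where "a0 = Re (sA$$(0,0))"
  define a1 where "a1 = Re (sA$$(1,1))"
  define b0 where "b0 = Re (sB$$(0,0))"
  define b1 where "b1 = Re (sB$$(1,1))"
  have A: "sA = m2 (of_real a0) 0 0 (of_real a1)" unfolding a0_def a1_def using diag_repr assms(5-7) .
  have B: "sB = m2 (of_real b0) 0 0 (of_real b1)" unfolding b0_def b1_def using diag_repr assms(8-10) .
  define X where "X = (cos (v/2) * cos (u/2) + sin (v/2) * sin (u/2))^2"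
  define Y where "Y = (cos (v/2) * cos (u/2) - sin (v/2) * sin (u/2))^2"
  have e1: "(sin (v/2) * cos (u/2) - cos (v/2) * sin (u/2))^2 = 1 - X" using trig1[of v u] unfolding X_def by linarith
  have e2: "(sin (v/2) * cos (u/2) + cos (v/2) * sin (u/2))^2 = 1 - Y" using trig2[of v u] unfolding Y_def by linarith
  have X01: "0 \<le> X" "X \<le> 1" using e1 unfolding X_def by (auto, smt (verit) zero_le_power2)
  have Y01: "0 \<le> Y" "Y \<le> 1" using e2 unfolding Y_def by (auto, smt (verit) zero_le_power2)
  have PA: "Phi_dual u v sA = m2 (of_real (X*a0 + (1-X)*a1)) 0 0 (of_real (Y*a1 + (1-Y)*a0))"
    unfolding A Phi_m2 e1 e2 X_def[symmetric] Y_def[symmetric] ..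
  have PB: "Phi_dual u v sB = m2 (of_real (X*b0 + (1-X)*b1)) 0 0 (of_real (Y*b1 + (1-Y)*b0))"
    unfolding B Phi_m2 e1 e2 X_def[symmetric] Y_def[symmetric] ..
  have H: "psd (mat 4 4 (\<lambda>(i,j). complex_of_real (G4 a0 a1 b0 b1 i j)))"
    using assms(11) unfolding A B M4 .
  note h = psd_G4[OF H]
  have K: "\<And>r s. r * s \<le> (1/2 - (X*a0 + (1-X)*a1) - ((1-Y)*b0 + Y*b1)) * r^2
               + (1/2 - ((1-Y)*a0 + Y*a1) - (X*b0 + (1-X)*b1)) * s^2"
    by (rule key[OF X01 Y01 h(1) h(2) h(3)])
  have D0: "0 \<le> -(X*a0 + (1-X)*a1) - (X*b0 + (1-X)*b1)"
  proof -
    have "0 \<le> X * (-(a0+b0)) + (1-X) * (-(a1+b1))" using X01 h(1,2) by (intro add_nonneg_nonneg mult_nonneg_nonneg) auto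
    thus ?thesis by (simp add: algebra_simps)
  qed
  have D3: "0 \<le> -(Y*a1 + (1-Y)*a0) - (Y*b1 + (1-Y)*b0)"
  proof -
    have "0 \<le> Y * (-(a1+b1)) + (1-Y) * (-(a0+b0))" using Y01 h(1,2) by (intro add_nonneg_nonneg mult_nonneg_nonneg) auto
    thus ?thesis by (simp add: algebra_simps)
  qed
  show ?thesis
    unfolding PA PB M4 psd_def
  proof (intro conjI G4_herm ballI)
    fix x :: "complex vec" assume "x \<in> carrier_vec (dim_row (mat 4 4 (\<lambda>(i,j). complex_of_real (G4 (X*a0 + (1-X)*a1) (Y*a1 + (1-Y)*a0) (X*b0 + (1-X)*b1) (Y*b1 + (1-Y)*b0) i j))))"
    hence x: "x \<in> carrier_vec 4" by simp
    have t0: "0 \<le> (-(X*a0 + (1-X)*a1) - (X*b0 + (1-X)*b1)) * ((Re (x$0))^2 + (Im (x$0))^2)"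
      using D0 by simp
    have t3: "0 \<le> (-(Y*a1 + (1-Y)*a0) - (Y*b1 + (1-Y)*b0)) * ((Re (x$3))^2 + (Im (x$3))^2)"
      using D3 by simp
    show "0 \<le> Re (conjugate x \<bullet> (mat 4 4 (\<lambda>(i,j). complex_of_real (G4 (X*a0 + (1-X)*a1) (Y*a1 + (1-Y)*a0) (X*b0 + (1-X)*b1) (Y*b1 + (1-Y)*b0) i j)) *\<^sub>v x))"
      unfolding qf[OF x] using K[of "Re (x$1)" "Re (x$2)"] K[of "Im (x$1)" "Im (x$2)"] t0 t3
      by (simp add: algebra_simps)
  qed
qed
end
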